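(* Let $n \ge 1$ be an integer and let $R$ be a $2n$-adically closed ring. Then there are no polygons in $R$.
   Context: All rings are commutative with $1$. For $k \in \mathbb{N}=\{1,2,\dots\}$, a ring $R$ is called $k$-adically closed if every monic polynomial of degree $k$ with coefficients in $R$ has a root in $R$ (a $2$-adically closed ring is also called quadratically closed). A polygon in a ring $R$ consists of: an integer $m>2$, irreducible closed subsets $C_0,\dots,C_{m-1}$ of $\mathrm{Spec}(R)$, and irreducible closed subsets $D_0,\dots,D_{m-1}$ of $\mathrm{Spec}(R)$, such that for all $i,j\in\{0,\dots,m-1\}$ we have $D_j\subset C_i$ if and only if $i=j$ or $i\equiv j+1 \pmod m$. (Irreducible closed subsets are nonempty.) *)

theory Defs
  imports "HOL-Computational_Algebra.Polynomial"
begin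

definition prime_ideal :: "'a::comm_ring_1 set \<Rightarrow> bool" where
  "prime_ideal P \<longleftrightarrow> 0 \<in> P \<and> (\<forall>x\<in>P. \<forall>y\<in>P. x + y \<in> P) \<and> (\<forall>x\<in>P. \<forall>r. r * x \<in> P)
     \<and> 1 \<notin> P \<and> (\<forall>x y. x * y \<in> P \<longrightarrow> x \<in> P \<or> y \<in> P)"

definition Spec :: "'a::comm_ring_1 set set" where
  "Spec = {P. prime_ideal P}"

definition zariski_closed :: "'a::comm_ring_1 set set \<Rightarrow> bool" where
  "zariski_closed Z \<longleftrightarrow> (\<exists>S. Z = {P \<in> Spec. S \<subseteq> P})"

definition irreducible_closed :: "'a::comm_ring_1 set set \<Rightarrow> bool" where
  "irreducible_closed Z \<longleftrightarrow> zariski_closed Z \<and> Z \<noteq> {} \<and>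
     (\<forall>Z1 Z2. zariski_closed Z1 \<longrightarrow> zariski_closed Z2 \<longrightarrow> Z \<subseteq> Z1 \<union> Z2 \<longrightarrow> Z \<subseteq> Z1 \<or> Z \<subseteq> Z2)"

definition k_adically_closed :: "nat \<Rightarrow> 'a::comm_ring_1 itself \<Rightarrow> bool" where
  "k_adically_closed k _ \<longleftrightarrow>
     (\<forall>p :: 'a poly. degree p = k \<and> lead_coeff p = 1 \<longrightarrow> (\<exists>x. poly p x = 0))"

definition is_polygon :: "nat \<Rightarrow> (nat \<Rightarrow> 'a::comm_ring_1 set set) \<Rightarrow> (nat \<Rightarrow> 'a set set) \<Rightarrow> bool" where
  "is_polygon m C D \<longleftrightarrow> m > 2 \<and>
     (\<forall>i<m. irreducible_closed (C i)) \<and> (\<forall>j<m. irreducible_closed (D j)) \<and>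
     (\<forall>i<m. \<forall>j<m. D j \<subseteq> C i \<longleftrightarrow> (i = j \<or> i = (j + 1) mod m))"

end

theory Submission imports Defs begin

lemma pi_add: "prime_ideal P \<Longrightarrow> x \<in> P \<Longrightarrow> y \<in> P \<Longrightarrow> x + y \<in> P"
  unfolding prime_ideal_def by blast
lemma pi_multl: "prime_ideal P \<Longrightarrow> x \<in> P \<Longrightarrow> r * x \<in> P"
  unfolding prime_ideal_def by blast
lemma pi_multr: "prime_ideal P \<Longrightarrow> x \<in> P \<Longrightarrow> x * r \<in> P"
  unfolding prime_ideal_def by (metis mult.commute)
lemma pi_neg: "prime_ideal P \<Longrightarrow> x \<in> P \<Longrightarrow> - x \<in> P"
  using pi_multl[of P x "-1"] by simp
lemma pi_diff: "prime_ideal P \<Longrightarrow> x \<in> P \<Longrightarrow> y \<in> P \<Longrightarrow> x - y \<in> P"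
  using pi_add[of P x "-y"] pi_neg[of P y] by simp
lemma pi_prime: "prime_ideal P \<Longrightarrow> x * y \<in> P \<Longrightarrow> x \<in> P \<or> y \<in> P"
  unfolding prime_ideal_def by blast
lemma pi_one: "prime_ideal P \<Longrightarrow> 1 \<notin> P"
  unfolding prime_ideal_def by blast
lemma pi_power: "prime_ideal P \<Longrightarrow> x ^ n \<in> P \<Longrightarrow> n \<ge> 1 \<Longrightarrow> x \<in> P"
proof (induction n)
  case (Suc n)
  then show ?case by (cases "n = 0") (auto dest: pi_prime)
qed simp

lemma prod_notin: assumes "prime_ideal P" "finite A" "\<forall>i\<in>A. f i \<notin> P" shows "prod f A \<notin> P"
  using assms(2,3)
proof (induction A rule: finite_induct)
  case empty then show ?case using assms(1) by (simp add: pi_one)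
next
  case (insert a A) then show ?case using assms(1) by (auto dest: pi_prime)
qed

lemma prod_in: "prime_ideal P \<Longrightarrow> finite A \<Longrightarrow> i \<in> A \<Longrightarrow> f i \<in> P \<Longrightarrow> prod f A \<in> P"
  by (metis prod.remove pi_multr)

lemma prod_inJ:
  assumes "\<forall>a\<in>J. \<forall>r. r * a \<in> J" "finite A" "A \<noteq> {}" "\<forall>i\<in>A. f i \<in> J"
  shows "prod f A \<in> J"
proof -
  obtain i where "i \<in> A" using assms(3) by blast
  then have "prod f A = prod f (A - {i}) * f i" using assms(2) by (metis prod.remove mult.commute)
  then show ?thesis using assms(1,4) \<open>i\<in>A\<close> by simp
qed

lemma avoid:
  fixes J :: "'a::comm_ring_1 set" and N :: nat and Q :: "nat \<Rightarrow> 'a set"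
  assumes J0: "0 \<in> J" and Jadd: "\<forall>a\<in>J. \<forall>b\<in>J. a + b \<in> J" and Jmul: "\<forall>a\<in>J. \<forall>r. r * a \<in> J"
    and hyp: "\<forall>k<N. prime_ideal (Q k) \<and> \<not> J \<subseteq> Q k"
  shows "\<exists>b\<in>J. \<forall>k<N. b \<notin> Q k"
  using hyp
proof (induction N arbitrary: Q)
  case 0
  then show ?case using J0 by blast
next
  case (Suc N)
  show ?case
  proof (cases "N = 0")
    case True
    then show ?thesis using Suc.prems by auto
  next
    case False
    have "\<forall>k\<le>N. \<exists>b\<in>J. \<forall>i\<le>N. i \<noteq> k \<longrightarrow> b \<notin> Q i"
    proof (intro allI impI)
      fix k assume "k \<le> N"
      define Q' where "Q' = (\<lambda>i. if i < k then Q i else Q (Suc i))"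
      have "\<forall>i<N. prime_ideal (Q' i) \<and> \<not> J \<subseteq> Q' i"
        using Suc.prems unfolding Q'_def by auto
      then obtain b where b: "b \<in> J" "\<forall>i<N. b \<notin> Q' i" using Suc.IH by blast
      have "\<forall>i\<le>N. i \<noteq> k \<longrightarrow> b \<notin> Q i"
      proof (intro allI impI)
        fix i assume "i \<le> N" "i \<noteq> k"
        show "b \<notin> Q i"
        proof (cases "i < k")
          case True
          then have "i < N" using \<open>k \<le> N\<close> by simp
          then show ?thesis using b True unfolding Q'_def by auto
        next
          case False
          then have "i > k" using \<open>i \<noteq> k\<close> by simp
          then obtain i' where "i = Suc i'" by (cases i) auto
          moreover have "i' < N" "\<not> i' < k" using \<open>i > k\<close> \<open>i \<le> N\<close> \<open>i = Suc i'\<close> by auto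
          ultimately have "b \<notin> Q' i'" "Q' i' = Q i" using b(2) unfolding Q'_def by auto
          then show ?thesis by simp
        qed
      qed
      then show "\<exists>b\<in>J. \<forall>i\<le>N. i \<noteq> k \<longrightarrow> b \<notin> Q i" using b by blast
    qed
    then have "\<forall>k. \<exists>b. k \<le> N \<longrightarrow> b \<in> J \<and> (\<forall>i\<le>N. i \<noteq> k \<longrightarrow> b \<notin> Q i)" by blast
    then have "\<exists>bb. \<forall>k. k \<le> N \<longrightarrow> bb k \<in> J \<and> (\<forall>i\<le>N. i \<noteq> k \<longrightarrow> bb k \<notin> Q i)" by (rule choice)
    then obtain bb where bb: "\<forall>k\<le>N. bb k \<in> J \<and> (\<forall>i\<le>N. i \<noteq> k \<longrightarrow> bb k \<notin> Q i)"
      by blast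
    show ?thesis
    proof (cases "\<exists>k\<le>N. bb k \<notin> Q k")
      case True
      then obtain k where "k \<le> N" "bb k \<notin> Q k" by blast
      moreover have "\<forall>i<Suc N. i \<noteq> k \<longrightarrow> bb k \<notin> Q i" using bb \<open>k \<le> N\<close> by auto
      ultimately have "\<forall>i<Suc N. bb k \<notin> Q i" by blast
      then show ?thesis using bb \<open>k \<le> N\<close> by blast
    next
      case False
      define c where "c = prod bb {..<N}"
      have pQ: "\<forall>i\<le>N. prime_ideal (Q i)" using Suc.prems by auto
      have cJ: "c \<in> J" unfolding c_def using prod_inJ[OF Jmul, of "{..<N}" bb] False bb \<open>N \<noteq> 0\<close> by auto
      have cin: "\<forall>i<N. c \<in> Q i" unfolding c_def proof (intro allI impI)
        fix i assume "i < N"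
        then show "prod bb {..<N} \<in> Q i" using prod_in[of "Q i" "{..<N}" i bb] pQ False by simp
      qed
      have cout: "c \<notin> Q N" unfolding c_def using prod_notin[of "Q N" "{..<N}" bb] pQ bb by auto
      define b where "b = c + bb N"
      have "b \<in> J" using cJ bb Jadd unfolding b_def by auto
      moreover have "\<forall>k<Suc N. b \<notin> Q k"
      proof (intro allI impI)
        fix k assume "k < Suc N"
        show "b \<notin> Q k"
        proof (cases "k = N")
          case True
          then show ?thesis using cout False pi_diff[of "Q N" b "bb N"] pQ unfolding b_def by auto
        next
          case F2: False
          then have "k < N" using \<open>k < Suc N\<close> by auto
          have "bb N \<notin> Q k" using bb F2 \<open>k < N\<close> by auto
          moreover have "c \<in> Q k" using cin \<open>k < N\<close> by auto
          moreover have "prime_ideal (Q k)" using pQ \<open>k < N\<close> by auto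
          ultimately show ?thesis using pi_diff[of "Q k" b c] unfolding b_def by auto
        qed
      qed
      ultimately show ?thesis by blast
    qed
  qed
qed

lemma irr_prime:
  fixes Z :: "'a::comm_ring_1 set set"
  assumes "irreducible_closed Z"
  shows "prime_ideal (\<Inter>Z) \<and> Z = {P \<in> Spec. \<Inter>Z \<subseteq> P}"
proof -
  obtain S where S: "Z = {P \<in> Spec. S \<subseteq> P}" using assms unfolding irreducible_closed_def zariski_closed_def by blast
  have ne: "Z \<noteq> {}" using assms unfolding irreducible_closed_def by blast
  have irr: "\<And>Z1 Z2. zariski_closed Z1 \<Longrightarrow> zariski_closed Z2 \<Longrightarrow> Z \<subseteq> Z1 \<union> Z2 \<Longrightarrow> Z \<subseteq> Z1 \<or> Z \<subseteq> Z2"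
    using assms unfolding irreducible_closed_def by blast
  have pr: "\<And>P. P \<in> Z \<Longrightarrow> prime_ideal P" using S unfolding Spec_def by auto
  have "prime_ideal (\<Inter>Z)"
    unfolding prime_ideal_def
  proof (intro conjI ballI allI impI)
    show "0 \<in> \<Inter>Z" using pr unfolding prime_ideal_def by blast
    show "\<And>x y. x \<in> \<Inter>Z \<Longrightarrow> y \<in> \<Inter>Z \<Longrightarrow> x + y \<in> \<Inter>Z" using pr pi_add by blast
    show "\<And>x r. x \<in> \<Inter>Z \<Longrightarrow> r * x \<in> \<Inter>Z" using pr pi_multl by blast
    show "1 \<notin> \<Inter>Z" using pr pi_one ne by blast
    fix x y assume xy: "x * y \<in> \<Inter>Z"
    let ?Z1 = "{P \<in> Spec. {x} \<subseteq> P}" and ?Z2 = "{P \<in> Spec. {y} \<subseteq> P}"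
    have c1: "zariski_closed ?Z1" "zariski_closed ?Z2" unfolding zariski_closed_def by blast+
    have "Z \<subseteq> ?Z1 \<union> ?Z2" using xy pr pi_prime S by blast
    then have "Z \<subseteq> ?Z1 \<or> Z \<subseteq> ?Z2" using irr c1 by blast
    then show "x \<in> \<Inter>Z \<or> y \<in> \<Inter>Z" by blast
  qed
  moreover have "Z = {P \<in> Spec. \<Inter>Z \<subseteq> P}"
  proof
    show "Z \<subseteq> {P \<in> Spec. \<Inter>Z \<subseteq> P}" using S by blast
    have "S \<subseteq> \<Inter>Z" using S by blast
    then show "{P \<in> Spec. \<Inter>Z \<subseteq> P} \<subseteq> Z" using S by blast
  qed
  ultimately show ?thesis by blast
qed

lemma irr_sub:
  fixes C D :: "'a::comm_ring_1 set set"
  assumes "irreducible_closed C" "irreducible_closed D"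
  shows "D \<subseteq> C \<longleftrightarrow> \<Inter>C \<subseteq> \<Inter>D"
proof -
  have C: "C = {P \<in> Spec. \<Inter>C \<subseteq> P}" using irr_prime[OF assms(1)] by blast
  have D: "D = {P \<in> Spec. \<Inter>D \<subseteq> P}" "prime_ideal (\<Inter>D)" using irr_prime[OF assms(2)] by blast+
  have qD: "\<Inter>D \<in> D" using D unfolding Spec_def by blast
  show ?thesis
  proof
    assume "D \<subseteq> C" then have "\<Inter>D \<in> C" using qD by blast
    then show "\<Inter>C \<subseteq> \<Inter>D" by blast
  next
    assume "\<Inter>C \<subseteq> \<Inter>D"
    then show "D \<subseteq> C" using C D by blast
  qed
qed


lemma monic_pow:
  fixes g :: "'a::comm_ring_1 poly"
  assumes "degree g = 2" "coeff g 2 = 1"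
  shows "degree (g^k) = 2*k \<and> coeff (g^k) (2*k) = 1"
proof (induction k)
  case 0 then show ?case by simp
next
  case (Suc k)
  have eq: "g ^ Suc k = g * g^k" by simp
  have c: "coeff (g * g^k) (degree g + degree (g^k)) = 1"
    using coeff_mult_degree_sum[of g "g^k"] Suc assms by simp
  have "degree (g * g^k) \<le> 2 * Suc k" using degree_mult_le[of g "g^k"] Suc assms by simp
  moreover have "degree (g * g^k) \<ge> 2 * Suc k" using c Suc assms le_degree[of "g * g^k" "2 * Suc k"] by simp
  ultimately show ?case using c Suc assms eq by simp
qed

lemma cyc:
  fixes P Q :: "nat \<Rightarrow> 'a::comm_ring_1 set" and n m :: nat
  assumes m: "m > 2" and pP: "\<forall>i<m. prime_ideal (P i)" and pQ: "\<forall>j<m. prime_ideal (Q j)"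
    and inc: "\<forall>i<m. \<forall>j<m. P i \<subseteq> Q j \<longleftrightarrow> (i = j \<or> i = (j + 1) mod m)"
    and n1: "n \<ge> 1" and kc: "k_adically_closed (2 * n) TYPE('a)"
  shows False
proof -
  have PQ: "\<And>i j. i<m \<Longrightarrow> j<m \<Longrightarrow> P i \<subseteq> Q j \<longleftrightarrow> (i = j \<or> i = (j+1) mod m)" using inc by blast
  have inc1: "\<And>i. i < m \<Longrightarrow> P i \<subseteq> Q i" using PQ by blast
  have inc2: "\<And>i. Suc i < m \<Longrightarrow> P (Suc i) \<subseteq> Q i" using PQ by simp
  have inc3: "P 0 \<subseteq> Q (m-1)" using PQ[of 0 "m-1"] m by simp
  have "\<not> P (m-1) \<subseteq> Q 0" using PQ[of "m-1" 0] m by simp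
  then obtain y0 where y0: "y0 \<in> P (m-1)" "y0 \<notin> Q 0" by blast
  have "\<forall>i. \<exists>z. 1 \<le> i \<and> i \<le> m-2 \<longrightarrow> z \<in> P i \<and> z \<notin> Q (m-1)"
  proof
    fix i
    show "\<exists>z. 1 \<le> i \<and> i \<le> m-2 \<longrightarrow> z \<in> P i \<and> z \<notin> Q (m-1)"
    proof (cases "1 \<le> i \<and> i \<le> m-2")
      case True
      then have "i < m" "i \<noteq> m - 1" using m by auto
      moreover have "(m - 1 + 1) mod m = 0" using m by simp
      ultimately have "\<not> P i \<subseteq> Q (m-1)" using PQ[of i "m-1"] m True by auto
      then show ?thesis by blast
    qed blast
  qed
  then have "\<exists>zz. \<forall>i. 1 \<le> i \<and> i \<le> m-2 \<longrightarrow> zz i \<in> P i \<and> zz i \<notin> Q (m-1)" by (rule choice)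
  then obtain zz where zz: "\<And>i. 1 \<le> i \<Longrightarrow> i \<le> m-2 \<Longrightarrow> zz i \<in> P i \<and> zz i \<notin> Q (m-1)"
    by blast
  define w0 where "w0 = prod zz {1..m-2}"
  have w0in: "\<And>i. 1 \<le> i \<Longrightarrow> i \<le> m-2 \<Longrightarrow> w0 \<in> P i"
  proof -
    fix i assume i: "1 \<le> i" "i \<le> m-2"
    then have "prime_ideal (P i)" using pP m by auto
    then show "w0 \<in> P i" unfolding w0_def using prod_in[of "P i" "{1..m-2}" i zz] zz i by auto
  qed
  have w0out: "w0 \<notin> Q (m-1)"
    unfolding w0_def using prod_notin[of "Q (m-1)" "{1..m-2}" zz] pQ zz m by auto
  define J where "J = {a + c + d | a c d. a \<in> P 0 \<and> c \<in> P (m-1) \<and> (\<forall>i. 1\<le>i \<and> i\<le>m-2 \<longrightarrow> d \<in> P i)}"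
  have pP': "\<And>i. i \<le> m-1 \<Longrightarrow> prime_ideal (P i)" using pP m by auto
  have z0: "\<And>i. i \<le> m - 1 \<Longrightarrow> 0 \<in> P i" using pP' unfolding prime_ideal_def by blast
  have J0: "0 \<in> J" unfolding J_def using z0 m by (intro CollectI exI[of _ 0]) auto
  have Jadd: "\<forall>a\<in>J. \<forall>b\<in>J. a + b \<in> J"
  proof (intro ballI)
    fix a b assume "a \<in> J" "b \<in> J"
    then obtain a1 a2 a3 b1 b2 b3 where A: "a = a1 + a2 + a3" "a1 \<in> P 0" "a2 \<in> P (m-1)" "\<forall>i. 1\<le>i \<and> i\<le>m-2 \<longrightarrow> a3 \<in> P i"
      and B: "b = b1 + b2 + b3" "b1 \<in> P 0" "b2 \<in> P (m-1)" "\<forall>i. 1\<le>i \<and> i\<le>m-2 \<longrightarrow> b3 \<in> P i"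
      unfolding J_def by blast
    have "a + b = (a1 + b1) + (a2 + b2) + (a3 + b3)" using A B by (simp add: algebra_simps)
    moreover have "a1 + b1 \<in> P 0" using A B pP' pi_add by blast
    moreover have "a2 + b2 \<in> P (m-1)" using A B pP' pi_add by blast
    moreover have "\<forall>i. 1\<le>i \<and> i\<le>m-2 \<longrightarrow> a3 + b3 \<in> P i"
    proof (intro allI impI)
      fix i assume "1\<le>i \<and> i\<le>m-2" then have "prime_ideal (P i)" "a3 \<in> P i" "b3 \<in> P i" using pP' A B by auto
      then show "a3 + b3 \<in> P i" using pi_add by blast
    qed
    ultimately show "a + b \<in> J" unfolding J_def by blast
  qed
  have Jmul: "\<forall>a\<in>J. \<forall>r. r * a \<in> J"
  proof (intro ballI allI)
    fix a r assume "a \<in> J"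
    then obtain a1 a2 a3 where A: "a = a1 + a2 + a3" "a1 \<in> P 0" "a2 \<in> P (m-1)" "\<forall>i. 1\<le>i \<and> i\<le>m-2 \<longrightarrow> a3 \<in> P i"
      unfolding J_def by blast
    have "r * a = r*a1 + r*a2 + r*a3" using A by (simp add: algebra_simps)
    moreover have "r*a1 \<in> P 0" using A pP' pi_multl by blast
    moreover have "r*a2 \<in> P (m-1)" using A pP' pi_multl by blast
    moreover have "\<forall>i. 1\<le>i \<and> i\<le>m-2 \<longrightarrow> r*a3 \<in> P i"
    proof (intro allI impI)
      fix i assume "1\<le>i \<and> i\<le>m-2" then have "prime_ideal (P i)" "a3 \<in> P i" using pP' A by auto
      then show "r*a3 \<in> P i" using pi_multl by blast
    qed
    ultimately show "r * a \<in> J" unfolding J_def by blast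
  qed
  have notsub: "\<forall>k<m. prime_ideal (Q k) \<and> \<not> J \<subseteq> Q k"
  proof (intro allI impI conjI)
    fix k assume k: "k < m"
    then show "prime_ideal (Q k)" using pQ by blast
    show "\<not> J \<subseteq> Q k"
    proof (cases "k = 0")
      case True
      have "y0 \<in> J" unfolding J_def using y0 z0 m by (intro CollectI exI[of _ 0] exI[of _ y0] exI[of _ 0]) auto
      then show ?thesis using y0 True by blast
    next
      case k0: False
      show ?thesis
      proof (cases "k = m-1")
        case True
        have "w0 \<in> J" unfolding J_def using w0in z0 m by (intro CollectI exI[of _ 0] exI[of _ 0] exI[of _ w0]) auto
        then show ?thesis using w0out True by blast
      next
        case False
        then have "\<not> P 0 \<subseteq> Q k" using PQ[of 0 k] k k0 m by simp
        then obtain x0 where x0: "x0 \<in> P 0" "x0 \<notin> Q k" by blast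
        have "x0 \<in> J" unfolding J_def using x0 z0 m by (intro CollectI exI[of _ x0] exI[of _ 0] exI[of _ 0]) auto
        then show ?thesis using x0 by blast
      qed
    qed
  qed
  obtain b where b: "b \<in> J" "\<forall>k<m. b \<notin> Q k" using avoid[OF J0 Jadd Jmul notsub] by blast
  then obtain x y w where xyw: "b = x + y + w" "x \<in> P 0" "y \<in> P (m-1)" "\<forall>i. 1\<le>i \<and> i\<le>m-2 \<longrightarrow> w \<in> P i"
    unfolding J_def by blast
  define u where "u = x + y"
  define g where "g = [: y*w, -b, 1 :]"
  have dg: "degree g = 2" "coeff g 2 = 1" unfolding g_def by (simp_all add: numeral_2_eq_2)
  have "degree (g^n) = 2*n \<and> lead_coeff (g^n) = 1" using monic_pow[OF dg, of n] by simp
  then obtain r where r: "poly (g^n) r = 0" using kc unfolding k_adically_closed_def by blast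
  define e where "e = r*r - b*r + y*w"
  have pe: "poly g r = e" unfolding g_def e_def by (simp add: algebra_simps)
  have "e ^ n = 0" using r pe by simp
  then have ein: "\<And>i. i \<le> m-1 \<Longrightarrow> e \<in> P i" using pi_power[of _ e n] pP' z0 n1 by simp
  have side: "\<And>i. 1 \<le> i \<Longrightarrow> i \<le> m-1 \<Longrightarrow> r \<in> P i \<or> r - b \<in> P i"
  proof -
    fix i assume i: "1 \<le> i" "i \<le> m-1"
    have "y * w \<in> P i"
    proof (cases "i = m-1")
      case True then show ?thesis using xyw pP' pi_multr by blast
    next
      case False then have "w \<in> P i" using xyw i by auto
      then show ?thesis using pP' i pi_multl by blast
    qed
    then have "e - y*w \<in> P i" using ein i pP' pi_diff by blast
    moreover have "e - y*w = r * (r - b)" unfolding e_def by (simp add: algebra_simps)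
    ultimately show "r \<in> P i \<or> r - b \<in> P i" using pi_prime[of "P i" r "r - b"] pP' i by simp
  qed
  have p0: "prime_ideal (P 0)" using pP' by simp
  have "x * w \<in> P 0" using xyw(2) p0 pi_multr by blast
  then have "e + x * w \<in> P 0" using ein[of 0] p0 pi_add[of "P 0" e "x*w"] by simp
  moreover have "e + x * w = (r - u) * (r - w)" unfolding e_def u_def xyw(1) by (simp add: algebra_simps)
  ultimately have cas: "r - u \<in> P 0 \<or> r - w \<in> P 0" using p0 pi_prime[of "P 0" "r - u" "r - w"] by simp
  have qm: "prime_ideal (Q (m-1))" "prime_ideal (Q 0)" using pQ m by auto
  have "x \<in> Q (m-1)" using xyw(2) inc3 by blast
  moreover have "y \<in> Q (m-1)" using xyw(3) inc1[of "m-1"] m by auto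
  ultimately have uQ: "u \<in> Q (m-1)" unfolding u_def using qm pi_add by blast
  have "w \<in> P 1" using xyw(4) m by auto
  then have wQ: "w \<in> Q 0" using inc2[of 0] m by auto
  have chain: "\<And>k. 1 \<le> k \<Longrightarrow> k \<le> m-1 \<Longrightarrow> (r \<in> P k \<longleftrightarrow> r \<in> P 1)"
  proof -
    fix k :: nat
    show "1 \<le> k \<Longrightarrow> k \<le> m-1 \<Longrightarrow> (r \<in> P k \<longleftrightarrow> r \<in> P 1)"
    proof (induction k)
      case 0 then show ?case by simp
    next
      case (Suc k)
      show ?case
      proof (cases "k = 0")
        case True then show ?thesis by simp
      next
        case False
        then have k: "1 \<le> k" "k \<le> m-1" "Suc k < m" using Suc.prems by auto
        have IH: "r \<in> P k \<longleftrightarrow> r \<in> P 1" using Suc.IH k by blast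
        have qk: "prime_ideal (Q k)" "P k \<subseteq> Q k" "P (Suc k) \<subseteq> Q k" using pQ inc1 inc2 k by auto
        have bk: "b \<notin> Q k" using b k by auto
        have s1: "r \<in> P k \<or> r - b \<in> P k" using side k by blast
        have s2: "r \<in> P (Suc k) \<or> r - b \<in> P (Suc k)" using side k by simp
        have x1: "\<not> (r \<in> Q k \<and> r - b \<in> Q k)"
        proof
          assume "r \<in> Q k \<and> r - b \<in> Q k"
          then have "r - (r - b) \<in> Q k" using qk pi_diff by blast
          then show False using bk by simp
        qed
        have "r \<in> P k \<longleftrightarrow> r \<in> P (Suc k)" using s1 s2 x1 qk by blast
        then show ?thesis using IH by blast
      qed
    qed
  qed
  have m1: "1 \<le> m - 1" using m by simp
  have P1Q0: "P 1 \<subseteq> Q 0" using inc2[of 0] m by simp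
  have Pm: "P (m-1) \<subseteq> Q (m-1)" using inc1[of "m-1"] m by simp
  have b0: "b \<notin> Q 0" "b \<notin> Q (m-1)" using b m by auto
  show False using cas
  proof
    assume h: "r - u \<in> P 0"
    have rQ: "r \<in> Q (m-1)" using h inc3 uQ qm pi_add[of "Q (m-1)" "r - u" u] by auto
    have rbQ: "r - b \<in> Q 0" using h inc2[of 0] m wQ qm pi_diff[of "Q 0" "r - u" w] inc1[of 0] xyw(1) u_def
      by (auto simp: algebra_simps)
    have "r - b \<notin> P (m-1)"
    proof
      assume "r - b \<in> P (m-1)"
      then have "r - (r - b) \<in> Q (m-1)" using rQ Pm qm pi_diff by blast
      then show False using b0 by simp
    qed
    then have "r \<in> P (m-1)" using side[OF m1] by simp
    then have "r \<in> P 1" using chain[OF m1] by simp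
    then have "r - (r - b) \<in> Q 0" using rbQ P1Q0 qm pi_diff by blast
    then show False using b0 by simp
  next
    assume h: "r - w \<in> P 0"
    have rQ: "r \<in> Q 0" using h inc1[of 0] m wQ qm pi_add[of "Q 0" "r - w" w] by auto
    have rbQ: "r - b \<in> Q (m-1)" using h inc3 uQ qm pi_diff[of "Q (m-1)" "r - w" u] xyw(1) u_def
      by (auto simp: algebra_simps)
    have "r \<notin> P (m-1)"
    proof
      assume "r \<in> P (m-1)"
      then have "r - (r - b) \<in> Q (m-1)" using rbQ Pm qm pi_diff by blast
      then show False using b0 by simp
    qed
    then have "r - b \<in> P (m-1)" using side[OF m1] by simp
    then have "r \<notin> P 1" using chain[OF m1] \<open>r \<notin> P (m-1)\<close> by simp
    then have "r - b \<in> P 1" using side[of 1] m by simp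
    then have "r - (r - b) \<in> Q 0" using rQ P1Q0 qm pi_diff by blast
    then show False using b0 by simp
  qed
qed


theorem mainTheorem1:
  fixes n :: nat
  assumes "n \<ge> 1"
    and "k_adically_closed (2 * n) TYPE('a::comm_ring_1)"
  shows "\<not> (\<exists>m (C :: nat \<Rightarrow> 'a set set) D. is_polygon m C D)"
proof
  assume "\<exists>m (C :: nat \<Rightarrow> 'a set set) D. is_polygon m C D"
  then obtain m and C D :: "nat \<Rightarrow> 'a set set" where pol: "is_polygon m C D" by blast
  define P where "P = (\<lambda>i. \<Inter>(C i))"
  define Q where "Q = (\<lambda>i. \<Inter>(D i))"
  have m: "m > 2" and ic: "\<forall>i<m. irreducible_closed (C i)" and id: "\<forall>j<m. irreducible_closed (D j)"
    and sub: "\<forall>i<m. \<forall>j<m. D j \<subseteq> C i \<longleftrightarrow> (i = j \<or> i = (j + 1) mod m)"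
    using pol unfolding is_polygon_def by blast+
  have pP: "\<forall>i<m. prime_ideal (P i)" using ic irr_prime unfolding P_def by blast
  have pQ: "\<forall>j<m. prime_ideal (Q j)" using id irr_prime unfolding Q_def by blast
  have inc: "\<forall>i<m. \<forall>j<m. P i \<subseteq> Q j \<longleftrightarrow> (i = j \<or> i = (j + 1) mod m)"
    using sub ic id irr_sub unfolding P_def Q_def by blast
  show False using cyc[OF m pP pQ inc assms] .
qed

end
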